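(* Assume the setting below and sharp missingness: $M_i(1)=M_i(0)$ for all $i$. Then: (i) for every $1\le k\le n_{\mathcal S1}$ and $c\in\mathbb R$, $p_{\texttt t,k,c,\mathcal S}$ is a valid p-value for $H^{\texttt{to}}_{k,c}:\sum_{i\in\mathcal S}Z_i\mathbf 1\{\tau_i>c\}\le n_{\mathcal S1}-k$ (equivalently $\tau_{\texttt{to}(k)}\le c$), i.e. $\mathbb P(p_{\texttt t,k,c,\mathcal S}\le\alpha\text{ and }H^{\texttt{to}}_{k,c}\text{ holds})\le\alpha$ for all $\alpha\in(0,1)$; (ii) for every $1\le k\le n_{\mathcal S1}$, $\mathcal I^\alpha_{\texttt{to},k}:=\{c\in\mathbb R:p_{\texttt t,k,c,\mathcal S}>\alpha\}$ is a $1-\alpha$ prediction interval for $\tau_{\texttt{to}(k)}$, and it is a one-sided interval of the form $[\hat\tau_{\texttt{to}(k)},\infty)$ or $(\hat\tau_{\texttt{to}(k)},\infty)$ with $\hat\tau_{\texttt{to}(k)}=\inf\mathcal I^\alpha_{\texttt{to},k}$; (iii) these are simultaneously valid: $\mathbb P(\tau_{\texttt{to}(k)}\in\mathcal I^\alpha_{\texttt{to},k}\text{ for all }1\le k\le n_{\mathcal S1})\ge1-\alpha$.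
   Context: There are $n$ units with fixed potential outcomes $Y_i^\star(0),Y_i^\star(1)\in\mathbb R$ and fixed potential missingness indicators $M_i(0),M_i(1)\in\{0,1\}$; $\tau_i=Y_i^\star(1)-Y_i^\star(0)$. $\boldsymbol Z\in\{0,1\}^n$ is from a completely randomized experiment: uniform over vectors with exactly $n_1$ ones ($n_1,n_0\ge1$ fixed, $n_1+n_0=n$), independent of all potential quantities. $M_i=Z_iM_i(1)+(1-Z_i)M_i(0)$; the realized outcome $Z_iY_i^\star(1)+(1-Z_i)Y_i^\star(0)$ is observed, denoted $Y_i$, iff $M_i=1$. $\mathcal S=\{i:M_i=1\}$, $n_{\mathcal S1}=\sum_{i\in\mathcal S}Z_i$, $n_{\mathcal S0}=|\mathcal S|-n_{\mathcal S1}$; $\tau_{\texttt{to}(1)}\le\dots\le\tau_{\texttt{to}(n_{\mathcal S1})}$ are the sorted $\tau_i$ over $i\in\mathcal S$ with $Z_i=1$. A $1-\alpha$ prediction interval $\mathcal I$ for a random quantity $\theta$ means $\mathbb P(\theta\in\mathcal I)\ge1-\alpha$. Statistics: $\overline{\mathbb R}=\mathbb R\cup\{\pm\infty\}$; $\psi_{i,j}(y,y')=\mathbf 1\{y>y'\}+\mathbf 1\{y=y'\}\mathbf 1\{i\ge j\}$; $\mathrm{rank}_i(\boldsymbol y)=\sum_j\psi_{i,j}(y_i,y_j)$; $\phi$ nondecreasing real function on nonnegative integers; $t_{\mathrm R,\phi}(\boldsymbol z,\boldsymbol y)$ is either $\sum_iz_i\phi(\mathrm{rank}_i(\boldsymbol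 y))$ or $\sum_iz_i\phi(\sum_j(1-z_j)\psi_{i,j}(y_i,y_j))$ (either choice). $t_{\mathrm R,\phi,\mathcal S}(\boldsymbol z,\boldsymbol y)=t_{\mathrm R,\phi}(\boldsymbol z_{\mathcal S},\boldsymbol y_{\mathcal S})$ (subvectors indexed by $\mathcal S$, original order); $G_{\mathrm R,\phi,\mathcal S}(c)=\mathbb P(t_{\mathrm R,\phi,\mathcal S}(\boldsymbol A,\boldsymbol y_0)\ge c)$ with $\boldsymbol A_{\mathcal S}$ uniform over assignments of $\mathcal S$ with exactly $n_{\mathcal S1}$ treated and $\boldsymbol y_0\in\mathbb R^n$ fixed. p-value: write $\{i:Z_i=M_i=1\}=\{j_1,\dots,j_{n_{\mathcal S1}}\}$ with $\psi_{j_{l+1},j_l}(Y_{j_{l+1}},Y_{j_l})=1$; $\mathcal J_L=\{j_{n_{\mathcal S1}-L+1},\dots,j_{n_{\mathcal S1}}\}$ for $L\ge1$, $\mathcal J_0=\emptyset$. Let $\boldsymbol v\in\overline{\mathbb R}^n$ with $v_i=-\infty$ for $i\in\mathcal J_{n_{\mathcal S1}-k}$ and $v_i=Y_i-cZ_i$ for other $i\in\mathcal S$ (coordinates outside $\mathcal S$ are unused). Then $p_{\texttt t,k,c,\mathcal S}=G_{\mathrm R,\phi,\mathcal S}(t_{\mathrm R,\phi,\mathcal S}(\boldsymbol Z,\boldsymbol v))$. *)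

theory Defs
  imports "HOL-Probability.Probability"
begin

(* Units are indexed 0..<n.  A treatment vector z in {0,1}^n is represented by the
   set of treated units {i. z_i = 1}. *)

definition assignments :: "nat \<Rightarrow> nat \<Rightarrow> nat set set" where
  "assignments n n1 = {T. T \<subseteq> {..<n} \<and> card T = n1}"

definition psi :: "nat \<Rightarrow> nat \<Rightarrow> 'b::linorder \<Rightarrow> 'b \<Rightarrow> nat" where
  "psi i j y y' = (if y > y' then 1 else 0) + (if y = y' \<and> i \<ge> j then 1 else 0)"

definition rankS :: "nat set \<Rightarrow> (nat \<Rightarrow> 'b::linorder) \<Rightarrow> nat \<Rightarrow> nat" where
  "rankS S y i = (\<Sum>j\<in>S. psi i j (y i) (y j))"

definition tRS :: "bool \<Rightarrow> (nat \<Rightarrow> real) \<Rightarrow> nat set \<Rightarrow> nat set \<Rightarrow> (nat \<Rightarrow> 'b::linorder) \<Rightarrow> real" where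
  "tRS b phi S z y =
     (\<Sum>i\<in>S \<inter> z. phi (if b then rankS S y i
                          else (\<Sum>j\<in>S - z. psi i j (y i) (y j))))"

(* G_{R,phi,S}(c), with m = n_{S1} treated units among S *)
definition GRS :: "bool \<Rightarrow> (nat \<Rightarrow> real) \<Rightarrow> nat set \<Rightarrow> nat \<Rightarrow> (nat \<Rightarrow> real) \<Rightarrow> real \<Rightarrow> real" where
  "GRS b phi S m y0 c =
     measure_pmf.prob (pmf_of_set {A. A \<subseteq> S \<and> card A = m}) {A. tRS b phi S A y0 \<ge> c}"

definition Yobs :: "(nat \<Rightarrow> real) \<Rightarrow> (nat \<Rightarrow> real) \<Rightarrow> nat set \<Rightarrow> nat \<Rightarrow> real" where
  "Yobs Y1 Y0 T i = (if i \<in> T then Y1 i else Y0 i)"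

definition Mobs :: "(nat \<Rightarrow> bool) \<Rightarrow> (nat \<Rightarrow> bool) \<Rightarrow> nat set \<Rightarrow> nat \<Rightarrow> bool" where
  "Mobs M1 M0 T i = (if i \<in> T then M1 i else M0 i)"

definition Sobs :: "nat \<Rightarrow> (nat \<Rightarrow> bool) \<Rightarrow> (nat \<Rightarrow> bool) \<Rightarrow> nat set \<Rightarrow> nat set" where
  "Sobs n M1 M0 T = {i. i < n \<and> Mobs M1 M0 T i}"

definition nS1 :: "nat \<Rightarrow> (nat \<Rightarrow> bool) \<Rightarrow> (nat \<Rightarrow> bool) \<Rightarrow> nat set \<Rightarrow> nat" where
  "nS1 n M1 M0 T = card (Sobs n M1 M0 T \<inter> T)"

(* J_L: the top L units of {i : Z_i = M_i = 1} in the order j_1,...,j_{n_S1}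
   (i.e. those with fewer than L units strictly above them in that order) *)
definition Jtop :: "nat \<Rightarrow> (nat \<Rightarrow> bool) \<Rightarrow> (nat \<Rightarrow> bool) \<Rightarrow> (nat \<Rightarrow> real) \<Rightarrow> (nat \<Rightarrow> real)
                    \<Rightarrow> nat set \<Rightarrow> nat \<Rightarrow> nat set" where
  "Jtop n M1 M0 Y1 Y0 T L =
     (let ST = Sobs n M1 M0 T \<inter> T; Y = Yobs Y1 Y0 T in
      {i \<in> ST. card {j \<in> ST. j \<noteq> i \<and> psi j i (Y j) (Y i) = 1} < L})"

definition vvec :: "nat \<Rightarrow> (nat \<Rightarrow> bool) \<Rightarrow> (nat \<Rightarrow> bool) \<Rightarrow> (nat \<Rightarrow> real) \<Rightarrow> (nat \<Rightarrow> real)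
                    \<Rightarrow> nat set \<Rightarrow> nat \<Rightarrow> real \<Rightarrow> nat \<Rightarrow> ereal" where
  "vvec n M1 M0 Y1 Y0 T k c i =
     (if i \<in> Jtop n M1 M0 Y1 Y0 T (nS1 n M1 M0 T - k) then -\<infinity>
      else ereal (Yobs Y1 Y0 T i - c * (if i \<in> T then 1 else 0)))"

definition pval :: "nat \<Rightarrow> (nat \<Rightarrow> bool) \<Rightarrow> (nat \<Rightarrow> bool) \<Rightarrow> (nat \<Rightarrow> real) \<Rightarrow> (nat \<Rightarrow> real)
                    \<Rightarrow> bool \<Rightarrow> (nat \<Rightarrow> real) \<Rightarrow> (nat \<Rightarrow> real) \<Rightarrow> nat set \<Rightarrow> nat \<Rightarrow> real \<Rightarrow> real" where
  "pval n M1 M0 Y1 Y0 b phi y0 T k c =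
     (let S = Sobs n M1 M0 T in
      GRS b phi S (nS1 n M1 M0 T) y0 (tRS b phi S T (vvec n M1 M0 Y1 Y0 T k c)))"

(* tau_{to(k)}: k-th smallest (1-based) of tau_i over i in S with Z_i = 1 *)
definition tau_to :: "nat \<Rightarrow> (nat \<Rightarrow> bool) \<Rightarrow> (nat \<Rightarrow> bool) \<Rightarrow> (nat \<Rightarrow> real) \<Rightarrow> (nat \<Rightarrow> real)
                      \<Rightarrow> nat set \<Rightarrow> nat \<Rightarrow> real" where
  "tau_to n M1 M0 Y1 Y0 T k =
     sort (map (\<lambda>i. Y1 i - Y0 i) (sorted_list_of_set (Sobs n M1 M0 T \<inter> T))) ! (k - 1)"

definition Hto :: "nat \<Rightarrow> (nat \<Rightarrow> bool) \<Rightarrow> (nat \<Rightarrow> bool) \<Rightarrow> (nat \<Rightarrow> real) \<Rightarrow> (nat \<Rightarrow> real)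
                   \<Rightarrow> nat set \<Rightarrow> nat \<Rightarrow> real \<Rightarrow> bool" where
  "Hto n M1 M0 Y1 Y0 T k c =
     (card {i \<in> Sobs n M1 M0 T \<inter> T. Y1 i - Y0 i > c} \<le> nS1 n M1 M0 T - k)"

definition Ito :: "nat \<Rightarrow> (nat \<Rightarrow> bool) \<Rightarrow> (nat \<Rightarrow> bool) \<Rightarrow> (nat \<Rightarrow> real) \<Rightarrow> (nat \<Rightarrow> real)
                    \<Rightarrow> bool \<Rightarrow> (nat \<Rightarrow> real) \<Rightarrow> (nat \<Rightarrow> real) \<Rightarrow> real \<Rightarrow> nat set \<Rightarrow> nat \<Rightarrow> real set" where
  "Ito n M1 M0 Y1 Y0 b phi y0 \<alpha> T k = {c. pval n M1 M0 Y1 Y0 b phi y0 T k c > \<alpha>}"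

end

theory Submission
  imports Defs
begin

definition klt :: "(nat \<Rightarrow> 'b::linorder) \<Rightarrow> nat \<Rightarrow> nat \<Rightarrow> bool" where
  "klt y i j \<longleftrightarrow> y i < y j \<or> (y i = y j \<and> i < j)"

lemma klt_trans: "klt y i j \<Longrightarrow> klt y j k \<Longrightarrow> klt y i k"
  unfolding klt_def by auto
lemma klt_irrefl: "\<not> klt y i i"
  unfolding klt_def by auto
lemma klt_total: "i \<noteq> j \<Longrightarrow> klt y i j \<or> klt y j i"
  unfolding klt_def by auto
lemma klt_asym: "klt y i j \<Longrightarrow> \<not> klt y j i"
  unfolding klt_def by auto

lemma psi_klt: "psi i j (y i) (y j) = (if klt y i j then 0 else 1)"
  unfolding psi_def klt_def by auto

lemma sum_psi: "finite X \<Longrightarrow> (\<Sum>j\<in>X. psi i j (y i) (y j)) = card {j\<in>X. \<not> klt y i j}"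
proof -
  assume "finite X"
  moreover have "X \<inter> - Collect (klt y i) = {j\<in>X. \<not> klt y i j}" by auto
  ultimately show ?thesis by (simp add: psi_klt sum.If_cases)
qed

definition rho :: "nat set \<Rightarrow> (nat \<Rightarrow> nat \<Rightarrow> bool) \<Rightarrow> nat \<Rightarrow> nat" where
  "rho A lt i = card {j\<in>A. lt j i}"

locale sto =
  fixes lt :: "nat \<Rightarrow> nat \<Rightarrow> bool"
  assumes trans: "lt i j \<Longrightarrow> lt j k \<Longrightarrow> lt i k"
    and irrefl: "\<not> lt i i"
    and total: "i \<noteq> j \<Longrightarrow> lt i j \<or> lt j i"
begin

lemma asym: "lt i j \<Longrightarrow> \<not> lt j i"
  using trans irrefl by blast

lemma rho_less:
  assumes "finite A" "i \<in> A" "j \<in> A"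
  shows "rho A lt i < rho A lt j \<longleftrightarrow> lt i j"
proof
  assume "lt i j"
  hence "{k\<in>A. lt k i} \<subseteq> {k\<in>A. lt k j}" "i \<in> {k\<in>A. lt k j}" "i \<notin> {k\<in>A. lt k i}"
    using assms trans irrefl by auto
  hence "{k\<in>A. lt k i} \<subset> {k\<in>A. lt k j}" by blast
  thus "rho A lt i < rho A lt j" unfolding rho_def using assms by (simp add: psubset_card_mono)
next
  assume h: "rho A lt i < rho A lt j"
  show "lt i j"
  proof (rule ccontr)
    assume "\<not> lt i j"
    hence "{k\<in>A. lt k j} \<subseteq> {k\<in>A. lt k i}" using total trans
      by (metis (mono_tags, lifting) Collect_mono h less_irrefl)
    hence "rho A lt j \<le> rho A lt i" unfolding rho_def using assms by (simp add: card_mono)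
    thus False using h by simp
  qed
qed

lemma rho_bij:
  assumes "finite A"
  shows "bij_betw (rho A lt) A {0..<card A}"
proof -
  have inj: "inj_on (rho A lt) A"
  proof (rule inj_onI)
    fix i j assume "i \<in> A" "j \<in> A" "rho A lt i = rho A lt j"
    thus "i = j" using rho_less[OF assms] total by (metis less_irrefl)
  qed
  have sub: "rho A lt ` A \<subseteq> {0..<card A}"
  proof
    fix x assume "x \<in> rho A lt ` A"
    then obtain i where i: "i \<in> A" "x = rho A lt i" by auto
    have "{k\<in>A. lt k i} \<subset> A" using i irrefl by auto
    thus "x \<in> {0..<card A}" using i assms unfolding rho_def by (simp add: psubset_card_mono)
  qed
  have "card (rho A lt ` A) = card A" using inj by (simp add: card_image)
  hence "rho A lt ` A = {0..<card A}" using sub by (simp add: card_subset_eq)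
  thus ?thesis using inj by (simp add: bij_betw_def)
qed

end

lemma sto_klt: "sto (klt y)"
  by unfold_locales (auto simp: klt_def)

lemma sto_rev: "sto lt \<Longrightarrow> sto (\<lambda>i j. lt j i)"
  unfolding sto_def by blast

definition dcnt :: "(nat \<Rightarrow> 'b::linorder) \<Rightarrow> nat set \<Rightarrow> nat \<Rightarrow> nat" where
  "dcnt y A j = card {i\<in>A. klt y i j}"

definition Ccnt :: "(nat \<Rightarrow> 'b::linorder) \<Rightarrow> nat set \<Rightarrow> nat set \<Rightarrow> nat \<Rightarrow> nat" where
  "Ccnt y S A r = card {j\<in>S - A. dcnt y A j \<le> r}"

lemma klt_iff_dcnt:
  assumes fin: "finite A" and i: "i \<in> A" and j: "j \<notin> A"
  shows "klt y j i \<longleftrightarrow> dcnt y A j \<le> rho A (klt y) i"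
proof
  assume "klt y j i"
  hence "{k\<in>A. klt y k j} \<subseteq> {k\<in>A. klt y k i}" using klt_trans by (metis (mono_tags, lifting) Collect_mono)
  thus "dcnt y A j \<le> rho A (klt y) i" unfolding dcnt_def rho_def using fin by (simp add: card_mono)
next
  assume h: "dcnt y A j \<le> rho A (klt y) i"
  show "klt y j i"
  proof (rule ccontr)
    assume "\<not> klt y j i"
    hence ij: "klt y i j" using klt_total[of i j y] i j by auto
    hence "{k\<in>A. klt y k i} \<subseteq> {k\<in>A. klt y k j}" "i \<in> {k\<in>A. klt y k j}" "i \<notin> {k\<in>A. klt y k i}"
      using i by (auto simp: klt_def)
    hence "{k\<in>A. klt y k i} \<subset> {k\<in>A. klt y k j}" by blast
    hence "rho A (klt y) i < dcnt y A j" unfolding dcnt_def rho_def using fin by (simp add: psubset_card_mono)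
    thus False using h by simp
  qed
qed

lemma tRS_repr:
  assumes fin: "finite S" and AS: "A \<subseteq> S"
  shows "tRS b phi S A y = (\<Sum>r<card A. phi (if b then r + 1 + Ccnt y S A r else Ccnt y S A r))"
proof -
  have finA: "finite A" using fin AS finite_subset by blast
  let ?r = "rho A (klt y)"
  have inner: "(\<Sum>j\<in>S - A. psi i j (y i) (y j)) = Ccnt y S A (?r i)" if i: "i \<in> A" for i
  proof -
    have "(\<Sum>j\<in>S - A. psi i j (y i) (y j)) = card {j\<in>S - A. \<not> klt y i j}"
      using fin by (simp add: sum_psi)
    also have "{j\<in>S - A. \<not> klt y i j} = {j\<in>S - A. dcnt y A j \<le> ?r i}"
    proof (rule Collect_cong)
      fix j
      show "(j \<in> S - A \<and> \<not> klt y i j) = (j \<in> S - A \<and> dcnt y A j \<le> ?r i)"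
      proof (cases "j \<in> S - A")
        case True
        hence "j \<noteq> i" using i by auto
        hence "(\<not> klt y i j) = klt y j i" using klt_total[of j i y] klt_asym[of y i j] by auto
        then show ?thesis using klt_iff_dcnt[OF finA i, of j y] True by auto
      qed auto
    qed
    finally show ?thesis unfolding Ccnt_def .
  qed
  have rank: "rankS S y i = ?r i + 1 + Ccnt y S A (?r i)" if i: "i \<in> A" for i
  proof -
    have "rankS S y i = card {j\<in>S. \<not> klt y i j}" unfolding rankS_def using fin by (simp add: sum_psi)
    also have "{j\<in>S. \<not> klt y i j} = {j\<in>A. \<not> klt y i j} \<union> {j\<in>S - A. \<not> klt y i j}" using AS by auto
    also have "card \<dots> = card {j\<in>A. \<not> klt y i j} + card {j\<in>S - A. \<not> klt y i j}"
      by (rule card_Un_disjoint) (use fin finA in auto)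
    also have "{j\<in>A. \<not> klt y i j} = insert i {j\<in>A. klt y j i}"
      using i by (auto simp: klt_def)
    also have "card \<dots> = ?r i + 1"
    proof -
      have "i \<notin> {j\<in>A. klt y j i}" using klt_irrefl by auto
      thus ?thesis using finA by (simp add: rho_def)
    qed
    also have "card {j\<in>S - A. \<not> klt y i j} = Ccnt y S A (?r i)"
      using inner[OF i] fin by (simp add: sum_psi)
    finally show ?thesis .
  qed
  have "tRS b phi S A y = (\<Sum>i\<in>A. phi (if b then ?r i + 1 + Ccnt y S A (?r i) else Ccnt y S A (?r i)))"
    unfolding tRS_def using AS inner rank by (intro sum.cong) (auto simp: Int_absorb1)
  also have "\<dots> = (\<Sum>r\<in>{0..<card A}. phi (if b then r + 1 + Ccnt y S A r else Ccnt y S A r))"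
    using sum.reindex_bij_betw[OF sto.rho_bij[OF sto_klt[of y] finA],
        of "\<lambda>r. phi (if b then r + 1 + Ccnt y S A r else Ccnt y S A r)"] by simp
  finally show ?thesis by (simp add: atLeast0LessThan)
qed

lemma tRS_mono:
  assumes fin: "finite S" and AS: "A \<subseteq> S" and phi: "mono phi"
    and d: "\<And>j. j \<in> S - A \<Longrightarrow> dcnt u A j \<le> dcnt v A j"
  shows "tRS b phi S A v \<le> tRS b phi S A u"
proof -
  have C: "Ccnt v S A r \<le> Ccnt u S A r" for r
    unfolding Ccnt_def using fin d by (intro card_mono) (auto intro: order_trans)
  show ?thesis unfolding tRS_repr[OF fin AS]
    by (intro sum_mono monoD[OF phi]) (use C in auto)
qed

lemma bij_betw_Collect:
  assumes "bij_betw h X Y" "\<And>x. x \<in> X \<Longrightarrow> P x \<longleftrightarrow> Q (h x)"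
  shows "bij_betw h {x\<in>X. P x} {y\<in>Y. Q y}"
proof (rule bij_betw_subset[OF assms(1)])
  show "{x \<in> X. P x} \<subseteq> X" by auto
  show "h ` {x \<in> X. P x} = {y \<in> Y. Q y}"
  proof
    show "h ` {x \<in> X. P x} \<subseteq> {y \<in> Y. Q y}"
    proof
      fix y assume "y \<in> h ` {x \<in> X. P x}"
      then obtain x where x: "x \<in> X" "P x" "y = h x" by auto
      have "h x \<in> Y" using assms(1) x(1) unfolding bij_betw_def by auto
      thus "y \<in> {y \<in> Y. Q y}" using x assms(2) by auto
    qed
    show "{y \<in> Y. Q y} \<subseteq> h ` {x \<in> X. P x}"
    proof
      fix y assume y: "y \<in> {y \<in> Y. Q y}"
      then obtain x where "x \<in> X" "y = h x" using assms(1) by (auto simp: bij_betw_def)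
      thus "y \<in> h ` {x \<in> X. P x}" using y assms(2) by auto
    qed
  qed
qed

lemma Ccnt_transfer:
  assumes fin: "finite S" and bij: "bij_betw h S S'" and AS: "A \<subseteq> S"
    and ord: "\<And>i j. i \<in> S \<Longrightarrow> j \<in> S \<Longrightarrow> klt y i j \<longleftrightarrow> klt y' (h i) (h j)"
  shows "Ccnt y S A r = Ccnt y' S' (h ` A) r"
proof -
  have inj: "inj_on h S" using bij bij_betw_def by blast
  have d: "dcnt y A j = dcnt y' (h ` A) (h j)" if j: "j \<in> S" for j
  proof -
    have "{i'\<in>h ` A. klt y' i' (h j)} = h ` {i\<in>A. klt y i j}" using ord AS j by auto
    moreover have "inj_on h {i\<in>A. klt y i j}" using inj AS by (auto intro: inj_on_subset)
    ultimately show ?thesis unfolding dcnt_def by (simp add: card_image)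
  qed
  have b1: "bij_betw h (S - A) (S' - h ` A)"
  proof (rule bij_betw_subset[OF bij])
    show "S - A \<subseteq> S" by auto
    have "h ` (S - A) = h ` S - h ` A" using inj AS by (simp add: inj_on_image_set_diff)
    thus "h ` (S - A) = S' - h ` A" using bij by (simp add: bij_betw_def)
  qed
  have "bij_betw h {j\<in>S - A. dcnt y A j \<le> r} {j'\<in>S' - h ` A. dcnt y' (h ` A) j' \<le> r}"
    by (rule bij_betw_Collect[OF b1]) (use d in auto)
  thus ?thesis unfolding Ccnt_def by (rule bij_betw_same_card)
qed

lemma tRS_transfer:
  assumes fin: "finite S" and bij: "bij_betw h S S'" and AS: "A \<subseteq> S"
    and ord: "\<And>i j. i \<in> S \<Longrightarrow> j \<in> S \<Longrightarrow> klt y i j \<longleftrightarrow> klt y' (h i) (h j)"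
  shows "tRS b phi S A y = tRS b phi S' (h ` A) y'"
proof -
  have fin': "finite S'" using bij fin bij_betw_finite by blast
  have sub: "h ` A \<subseteq> S'" using bij AS bij_betwE by blast
  have cA: "card (h ` A) = card A" using bij AS by (meson bij_betw_imp_inj_on card_image inj_on_subset)
  have C: "Ccnt y S A r = Ccnt y' S' (h ` A) r" for r
    by (rule Ccnt_transfer[OF fin bij AS]) (rule ord)
  show ?thesis
    unfolding tRS_repr[OF fin AS] tRS_repr[OF fin' sub] cA C ..
qed

lemma klt_id: "klt (id::nat\<Rightarrow>nat) i j \<longleftrightarrow> i < j"
  unfolding klt_def by auto

definition asub :: "nat set \<Rightarrow> nat \<Rightarrow> nat set set" where
  "asub S m = {A. A \<subseteq> S \<and> card A = m}"

lemma count_canon: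
  assumes fin: "finite S"
  shows "card {A\<in>asub S m. c \<le> tRS b phi S A y}
       = card {B\<in>asub {0..<card S} m. c \<le> tRS b phi {0..<card S} B (id::nat\<Rightarrow>nat)}"
proof -
  let ?r = "rho S (klt y)"
  have bij: "bij_betw ?r S {0..<card S}" by (rule sto.rho_bij[OF sto_klt fin])
  have ord: "klt y i j \<longleftrightarrow> klt id (?r i) (?r j)" if "i \<in> S" "j \<in> S" for i j
    using sto.rho_less[OF sto_klt[of y] fin that] by (simp add: klt_id)
  have bP: "bij_betw (image ?r) (Pow S) (Pow {0..<card S})" by (rule bij_betw_Pow[OF bij])
  have bA: "bij_betw (image ?r) (asub S m) (asub {0..<card S} m)"
  proof -
    have "bij_betw (image ?r) {A\<in>Pow S. card A = m} {B\<in>Pow {0..<card S}. card B = m}"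
    proof (rule bij_betw_Collect[OF bP])
      fix x assume "x \<in> Pow S"
      hence "inj_on ?r x" using bij bij_betw_imp_inj_on inj_on_subset by blast
      thus "(card x = m) = (card (?r ` x) = m)" by (simp add: card_image)
    qed
    thus ?thesis unfolding asub_def by (simp add: Pow_def)
  qed
  have "bij_betw (image ?r) {A\<in>asub S m. c \<le> tRS b phi S A y}
       {B\<in>asub {0..<card S} m. c \<le> tRS b phi {0..<card S} B (id::nat\<Rightarrow>nat)}"
    by (rule bij_betw_Collect[OF bA]) (simp add: tRS_transfer[OF fin bij _ ord] asub_def)
  thus ?thesis by (rule bij_betw_same_card)
qed

lemma finite_asub: "finite S \<Longrightarrow> finite (asub S m)"
  unfolding asub_def by (rule finite_subset[of _ "Pow S"]) auto

lemma asub_ne: "finite S \<Longrightarrow> m \<le> card S \<Longrightarrow> asub S m \<noteq> {}"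
  unfolding asub_def by (metis (mono_tags, lifting) empty_Collect_eq obtain_subset_with_card_n)

lemma GRS_count:
  assumes fin: "finite S" and m: "m \<le> card S"
  shows "GRS b phi S m y0 c = card {A\<in>asub S m. c \<le> tRS b phi S A y} / card (asub S m)"
proof -
  have "GRS b phi S m y0 c = card (asub S m \<inter> {A. c \<le> tRS b phi S A y0}) / card (asub S m)"
    unfolding GRS_def asub_def[symmetric]
    by (rule measure_pmf_of_set[OF asub_ne[OF fin m] finite_asub[OF fin]])
  also have "asub S m \<inter> {A. c \<le> tRS b phi S A y0} = {A\<in>asub S m. c \<le> tRS b phi S A y0}" by auto
  also have "card \<dots> = card {A\<in>asub S m. c \<le> tRS b phi S A y}"
    unfolding count_canon[OF fin] ..
  finally show ?thesis .
qed

lemma card_group: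
  assumes "finite S" "finite I" "g ` S \<subseteq> I"
  shows "card S = (\<Sum>y\<in>I. card {x\<in>S. g x = y})"
  using sum.group[OF assms, of "\<lambda>_. 1::nat"] by simp

lemma min_arg:
  fixes t :: "'a \<Rightarrow> real" and \<alpha> :: real
  assumes fin: "finite X" and ne: "X \<noteq> {}" and a: "0 \<le> \<alpha>"
    and G: "\<And>c. G c = card {x\<in>X. c \<le> t x} / card X"
  shows "card {x\<in>X. G (t x) \<le> \<alpha>} \<le> \<alpha> * card X"
proof (cases "{x\<in>X. G (t x) \<le> \<alpha>} = {}")
  case True thus ?thesis using a by (simp del: Collect_empty_eq)
next
  case False
  let ?W = "{x\<in>X. G (t x) \<le> \<alpha>}"
  have finW: "finite ?W" using fin by simp
  have "Min (t ` ?W) \<in> t ` ?W" using finW False by (intro Min_in) auto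
  then obtain x0 where x0: "x0 \<in> ?W" "t x0 = Min (t ` ?W)" by (auto simp del: Collect_empty_eq)
  have "?W \<subseteq> {x\<in>X. t x0 \<le> t x}"
  proof
    fix x assume "x \<in> ?W"
    hence "Min (t ` ?W) \<le> t x" using finW by (intro Min_le) auto
    thus "x \<in> {x\<in>X. t x0 \<le> t x}" using x0 \<open>x \<in> ?W\<close> by auto
  qed
  hence "card ?W \<le> card {x\<in>X. t x0 \<le> t x}" using fin by (intro card_mono) auto
  also have "real (card {x\<in>X. t x0 \<le> t x}) = G (t x0) * card X"
    using G[of "t x0"] ne fin by (simp add: card_gt_0_iff)
  also have "\<dots> \<le> \<alpha> * card X" using x0(1) by (intro mult_right_mono) auto
  finally show ?thesis by simp
qed

lemma fiber_bij:
  assumes Sn: "S \<subseteq> {..<n}" and A: "A \<in> asub S m" and m: "m \<le> n1"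
  shows "bij_betw (\<lambda>R. A \<union> R) (asub ({..<n} - S) (n1 - m)) {T\<in>assignments n n1. S \<inter> T = A}"
proof -
  have AS: "A \<subseteq> S" "card A = m" using A by (auto simp: asub_def)
  have finA: "finite A" by (rule finite_subset[OF subset_trans[OF AS(1) Sn]]) simp
  show ?thesis
  proof (rule bij_betw_byWitness[where f' = "\<lambda>T. T - S"])
    show "\<forall>R\<in>asub ({..<n} - S) (n1 - m). A \<union> R - S = R" using AS by (auto simp: asub_def)
    show "\<forall>T\<in>{T \<in> assignments n n1. S \<inter> T = A}. A \<union> (T - S) = T" by auto
    show "(\<lambda>R. A \<union> R) ` asub ({..<n} - S) (n1 - m) \<subseteq> {T \<in> assignments n n1. S \<inter> T = A}"
    proof
      fix T assume "T \<in> (\<lambda>R. A \<union> R) ` asub ({..<n} - S) (n1 - m)"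
      then obtain R where R: "R \<subseteq> {..<n} - S" "card R = n1 - m" "T = A \<union> R" by (auto simp: asub_def)
      have finR: "finite R" by (rule finite_subset[OF R(1)]) simp
      have "card T = m + (n1 - m)" using R AS finA finR by (subst R(3), subst card_Un_disjoint) auto
      thus "T \<in> {T \<in> assignments n n1. S \<inter> T = A}"
        using R AS Sn m by (auto simp: assignments_def)
    qed
    show "(\<lambda>T. T - S) ` {T \<in> assignments n n1. S \<inter> T = A} \<subseteq> asub ({..<n} - S) (n1 - m)"
    proof
      fix R assume "R \<in> (\<lambda>T. T - S) ` {T \<in> assignments n n1. S \<inter> T = A}"
      then obtain T where T: "T \<subseteq> {..<n}" "card T = n1" "S \<inter> T = A" "R = T - S"
        by (auto simp: assignments_def)
      have finT: "finite T" by (rule finite_subset[OF T(1)]) simp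
      have "T = A \<union> R" "A \<inter> R = {}" using T by auto
      hence "card T = card A + card R" using finT by (simp add: card_Un_disjoint)
      thus "R \<in> asub ({..<n} - S) (n1 - m)" using T AS by (auto simp: asub_def)
    qed
  qed
qed

lemma cond_count:
  assumes Sn: "S \<subseteq> {..<n}" and Q: "Q \<subseteq> asub S m" and m: "m \<le> n1"
  shows "card {T\<in>assignments n n1. S \<inter> T \<in> Q} = card Q * card (asub ({..<n} - S) (n1 - m))"
proof -
  have finS: "finite S" by (rule finite_subset[OF Sn]) simp
  have finQ: "finite Q" by (rule finite_subset[OF Q finite_asub[OF finS]])
  have eq: "{T\<in>assignments n n1. S \<inter> T \<in> Q} = (\<Union>A\<in>Q. {T\<in>assignments n n1. S \<inter> T = A})" by auto
  have fa: "finite (assignments n n1)" unfolding assignments_def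
    by (rule finite_subset[of _ "Pow {..<n}"]) auto
  have "card (\<Union>A\<in>Q. {T\<in>assignments n n1. S \<inter> T = A}) = (\<Sum>A\<in>Q. card {T\<in>assignments n n1. S \<inter> T = A})"
    by (rule card_UN_disjoint) (use finQ fa in auto)
  also have "\<dots> = (\<Sum>A\<in>Q. card (asub ({..<n} - S) (n1 - m)))"
  proof (rule sum.cong[OF refl])
    fix A assume "A \<in> Q"
    hence "A \<in> asub S m" using Q by blast
    from bij_betw_same_card[OF fiber_bij[OF Sn this m]]
    show "card {T\<in>assignments n n1. S \<inter> T = A} = card (asub ({..<n} - S) (n1 - m))" by simp
  qed
  finally show ?thesis using eq by simp
qed

lemma tRS_Int: "tRS b phi S (S \<inter> T) y = tRS b phi S T y"
proof -
  have e1: "S - S \<inter> T = S - T" by auto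
  have e2: "S \<inter> (S \<inter> T) = S \<inter> T" by auto
  show ?thesis unfolding tRS_def e1 e2 ..
qed

lemma finite_assignments: "finite (assignments n n1)"
  unfolding assignments_def by (rule finite_subset[of _ "Pow {..<n}"]) auto

lemma lemmaV:
  fixes u :: "nat \<Rightarrow> 'b::linorder" and \<alpha> :: real
  assumes Sn: "S \<subseteq> {..<n}" and a: "0 \<le> \<alpha>"
  shows "card {T\<in>assignments n n1. GRS b phi S (card (S \<inter> T)) y0 (tRS b phi S T u) \<le> \<alpha>}
         \<le> \<alpha> * card (assignments n n1)"
proof -
  let ?asg = "assignments n n1"
  let ?P = "\<lambda>T. GRS b phi S (card (S \<inter> T)) y0 (tRS b phi S T u) \<le> \<alpha>"
  let ?K = "\<lambda>m. card (asub ({..<n} - S) (n1 - m))"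
  let ?Q = "\<lambda>m. {A\<in>asub S m. GRS b phi S m y0 (tRS b phi S A u) \<le> \<alpha>}"
  have finS: "finite S" by (rule finite_subset[OF Sn]) simp
  have fa: "finite ?asg" by (rule finite_assignments)
  have g: "(\<lambda>T. card (S \<inter> T)) ` X \<subseteq> {..n1}" if "X \<subseteq> ?asg" for X
  proof
    fix x assume "x \<in> (\<lambda>T. card (S \<inter> T)) ` X"
    then obtain T where T: "T \<in> X" "x = card (S \<inter> T)" by auto
    hence T: "T \<in> ?asg" "x = card (S \<inter> T)" using that by auto
    have "finite T" using T(1) by (auto simp: assignments_def intro: finite_subset)
    hence "card (S \<inter> T) \<le> card T" by (intro card_mono) auto
    thus "x \<in> {..n1}" using T by (auto simp: assignments_def)
  qed
  have Qm: "card (?Q m) \<le> \<alpha> * card (asub S m)" for m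
  proof (cases "m \<le> card S")
    case True
    show ?thesis
      by (rule min_arg[OF finite_asub[OF finS] asub_ne[OF finS True] a])
        (rule GRS_count[OF finS True])
  next
    case False
    have "asub S m = {}"
    proof (rule ccontr)
      assume "asub S m \<noteq> {}"
      then obtain A where "A \<subseteq> S" "card A = m" by (auto simp: asub_def)
      thus False using False card_mono[OF finS] by fastforce
    qed
    thus ?thesis by simp
  qed
  have fib: "{T\<in>{T\<in>?asg. ?P T}. card (S \<inter> T) = m} = {T\<in>?asg. S \<inter> T \<in> ?Q m}" for m
    by (auto simp: asub_def tRS_Int)
  have fib2: "{T\<in>?asg. card (S \<inter> T) = m} = {T\<in>?asg. S \<inter> T \<in> asub S m}" for m
    by (auto simp: asub_def)
  have "card {T\<in>?asg. ?P T} = (\<Sum>m\<le>n1. card {T\<in>{T\<in>?asg. ?P T}. card (S \<inter> T) = m})"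
    by (rule card_group) (use fa g in auto)
  also have "\<dots> = (\<Sum>m\<le>n1. card (?Q m) * ?K m)"
  proof (rule sum.cong[OF refl])
    fix m assume "m \<in> {..n1}"
    hence m: "m \<le> n1" by simp
    have "card {T\<in>{T\<in>?asg. ?P T}. card (S \<inter> T) = m} = card {T\<in>?asg. S \<inter> T \<in> ?Q m}"
      by (simp only: fib)
    also have "\<dots> = card (?Q m) * ?K m" by (rule cond_count[OF Sn _ m]) auto
    finally show "card {T\<in>{T\<in>?asg. ?P T}. card (S \<inter> T) = m} = card (?Q m) * ?K m" .
  qed
  finally have 1: "real (card {T\<in>?asg. ?P T}) = (\<Sum>m\<le>n1. real (card (?Q m)) * ?K m)" by simp
  have "card ?asg = (\<Sum>m\<le>n1. card {T\<in>?asg. card (S \<inter> T) = m})"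
    by (rule card_group) (use fa g in auto)
  also have "\<dots> = (\<Sum>m\<le>n1. card (asub S m) * ?K m)"
  proof (rule sum.cong[OF refl])
    fix m assume "m \<in> {..n1}"
    hence m: "m \<le> n1" by simp
    have "card {T\<in>?asg. card (S \<inter> T) = m} = card {T\<in>?asg. S \<inter> T \<in> asub S m}"
      by (simp only: fib2)
    also have "\<dots> = card (asub S m) * ?K m" by (rule cond_count[OF Sn _ m]) auto
    finally show "card {T\<in>?asg. card (S \<inter> T) = m} = card (asub S m) * ?K m" .
  qed
  finally have 2: "real (card ?asg) = (\<Sum>m\<le>n1. real (card (asub S m)) * ?K m)" by simp
  have "(\<Sum>m\<le>n1. real (card (?Q m)) * ?K m) \<le> (\<Sum>m\<le>n1. \<alpha> * card (asub S m) * ?K m)"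
    by (intro sum_mono mult_right_mono Qm) auto
  also have "\<dots> = \<alpha> * (\<Sum>m\<le>n1. real (card (asub S m)) * ?K m)"
    by (simp add: sum_distrib_left mult.assoc)
  finally show ?thesis using 1 2 by simp
qed

lemma klt_mono_left:
  assumes "v i \<le> u i" "v j = u j" "klt u i j"
  shows "klt v i j"
  using assms unfolding klt_def by (auto intro: order.strict_trans1)

lemma Jcard:
  fixes Y1 :: "nat \<Rightarrow> real"
  assumes finA: "finite A" and L: "L \<le> card A"
    and J: "J = {i\<in>A. card {j\<in>A. j \<noteq> i \<and> psi j i (Y1 j) (Y1 i) = 1} < L}"
  shows "L \<le> card J" and "\<And>q r. q \<in> J \<Longrightarrow> r \<in> A - J \<Longrightarrow> klt Y1 r q"
proof -
  let ?lt = "\<lambda>a b. klt Y1 b a"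
  have sto: "sto ?lt" by (rule sto_rev[OF sto_klt])
  have eqc: "{j\<in>A. j \<noteq> i \<and> psi j i (Y1 j) (Y1 i) = 1} = {j\<in>A. ?lt j i}" for i
    using klt_total[of _ i Y1] klt_asym[of Y1] klt_irrefl[of Y1]
    by (auto simp: psi_klt)
  have J': "J = {i\<in>A. rho A ?lt i < L}" unfolding J rho_def eqc ..
  have "bij_betw (rho A ?lt) {i\<in>A. rho A ?lt i < L} {x\<in>{0..<card A}. x < L}"
    by (rule bij_betw_Collect[OF sto.rho_bij[OF sto finA]]) simp
  moreover have "{x\<in>{0..<card A}. x < L} = {0..<L}" using L by auto
  ultimately have "card J = L" unfolding J' by (simp add: bij_betw_same_card)
  thus "L \<le> card J" by simp
  fix q r assume q: "q \<in> J" and r: "r \<in> A - J"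
  have "rho A ?lt q < rho A ?lt r" using q r unfolding J' by auto
  thus "klt Y1 r q" using sto.rho_less[OF sto finA, of q r] q r unfolding J' by auto
qed

lemma main_ineq:
  fixes Y1 Y0 :: "nat \<Rightarrow> real" and v :: "nat \<Rightarrow> ereal"
  assumes finS: "finite S" and AS: "A \<subseteq> S" and phi: "mono phi"
    and J: "J = {i\<in>A. card {j\<in>A. j \<noteq> i \<and> psi j i (Y1 j) (Y1 i) = 1} < L}"
    and L: "L \<le> card A"
    and H: "card {i\<in>A. c < Y1 i - Y0 i} \<le> L"
    and v: "\<And>i. i \<in> S \<Longrightarrow> v i = (if i \<in> J then -\<infinity> else ereal (if i \<in> A then Y1 i - c else Y0 i))"
  shows "tRS b phi S A v \<le> tRS b phi S A (\<lambda>i. ereal (Y0 i))"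
proof (rule tRS_mono[OF finS AS phi])
  let ?u = "\<lambda>i. ereal (Y0 i)"
  have finA: "finite A" by (rule finite_subset[OF AS finS])
  have JA: "J \<subseteq> A" using J by auto
  note Jc = Jcard[OF finA L J]
  fix j assume j: "j \<in> S - A"
  have vj: "v j = ?u j" using v j JA by auto
  let ?B = "{i\<in>A. c < Y1 i - Y0 i}"
  let ?Xu = "{i\<in>A. klt ?u i j}"
  let ?Xv = "{i\<in>A. klt v i j}"
  have JX: "J \<subseteq> ?Xv"
  proof
    fix i assume i: "i \<in> J"
    hence "v i = -\<infinity>" using v JA AS by auto
    thus "i \<in> ?Xv" using i JA vj unfolding klt_def by auto
  qed
  have RB: "{i\<in>A - J - ?B. klt ?u i j} \<subseteq> {i\<in>A - J - ?B. klt v i j}"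
  proof
    fix i assume i: "i \<in> {i\<in>A - J - ?B. klt ?u i j}"
    hence "v i = ereal (Y1 i - c)" using v AS by auto
    hence "v i \<le> ?u i" using i by auto
    thus "i \<in> {i\<in>A - J - ?B. klt v i j}" using klt_mono_left[of v i ?u j] i vj by auto
  qed
  show "dcnt ?u A j \<le> dcnt v A j"
  proof (cases "\<exists>q\<in>J - ?B. klt ?u q j")
    case True
    then obtain q where q: "q \<in> J" "q \<notin> ?B" "klt ?u q j" by blast
    have qc: "Y1 q - c \<le> Y0 q" using q JA by auto
    have "A - J \<subseteq> ?Xv"
    proof
      fix r assume r: "r \<in> A - J"
      have rq: "klt Y1 r q" by (rule Jc(2)[OF q(1) r])
      have vr: "v r = ereal (Y1 r - c)" using v r AS by auto
      have "klt v r j" using rq qc q(3) vr vj unfolding klt_def by auto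
      thus "r \<in> ?Xv" using r by auto
    qed
    hence "?Xv = A" using JX by auto
    hence "?Xu \<subseteq> ?Xv" by auto
    thus ?thesis unfolding dcnt_def using finA by (intro card_mono) auto
  next
    case False
    have "?Xu \<subseteq> ?B \<union> {i\<in>A - J - ?B. klt ?u i j}" using False by auto
    hence "card ?Xu \<le> card (?B \<union> {i\<in>A - J - ?B. klt ?u i j})" using finA by (intro card_mono) auto
    also have "\<dots> \<le> card ?B + card {i\<in>A - J - ?B. klt ?u i j}" by (rule card_Un_le)
    also have "\<dots> \<le> card J + card {i\<in>A - J - ?B. klt v i j}"
      using H Jc(1) card_mono[OF _ RB] finA by (intro add_mono) auto
    also have "\<dots> = card (J \<union> {i\<in>A - J - ?B. klt v i j})"
      using finA JA by (subst card_Un_disjoint) (auto intro: finite_subset)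
    also have "\<dots> \<le> card ?Xv" using JX finA JA by (intro card_mono) auto
    finally show ?thesis unfolding dcnt_def .
  qed
qed

lemma GRS_anti: "c \<le> c' \<Longrightarrow> GRS b phi S m y0 c' \<le> GRS b phi S m y0 c"
  unfolding GRS_def by (intro measure_pmf.finite_measure_mono) auto

lemma upclosed_interval:
  fixes I :: "real set"
  assumes up: "\<And>c c'. c \<in> I \<Longrightarrow> c \<le> c' \<Longrightarrow> c' \<in> I"
  shows "I = {c. Inf (ereal ` I) \<le> ereal c} \<or> I = {c. Inf (ereal ` I) < ereal c}"
proof -
  let ?h = "Inf (ereal ` I)"
  have lo: "I \<subseteq> {c. ?h \<le> ereal c}" by (auto intro: Inf_lower)
  have hi: "{c. ?h < ereal c} \<subseteq> I"
  proof
    fix c assume "c \<in> {c. ?h < ereal c}"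
    then obtain x where "x \<in> I" "ereal x < ereal c" by (auto simp: Inf_less_iff)
    thus "c \<in> I" using up by auto
  qed
  show ?thesis
  proof (cases "?h \<in> ereal ` I")
    case True
    then obtain r where r: "r \<in> I" "?h = ereal r" by auto
    have "{c. ?h \<le> ereal c} \<subseteq> I" using r up by auto
    thus ?thesis using lo by auto
  next
    case False
    have "I \<subseteq> {c. ?h < ereal c}"
    proof
      fix c assume c: "c \<in> I"
      hence "?h \<le> ereal c" using lo by auto
      moreover have "?h \<noteq> ereal c" using False c by auto
      ultimately show "c \<in> {c. ?h < ereal c}" by auto
    qed
    thus ?thesis using hi by auto
  qed
qed

lemma sorted_kth_H:
  fixes xs :: "nat list" and \<tau> :: "nat \<Rightarrow> real"
  assumes d: "distinct xs" and k: "1 \<le> k" "k \<le> length xs"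
  shows "card {i\<in>set xs. sort (map \<tau> xs) ! (k - 1) < \<tau> i} \<le> length xs - k"
proof -
  let ?ys = "sort (map \<tau> xs)"
  let ?x = "?ys ! (k - 1)"
  have "card {i\<in>set xs. ?x < \<tau> i} = length (filter (\<lambda>i. ?x < \<tau> i) xs)"
    using distinct_length_filter[OF d] by (simp add: Int_def conj_commute)
  also have "\<dots> = length (filter (\<lambda>y. ?x < y) (map \<tau> xs))" by (simp add: filter_map comp_def)
  also have "\<dots> = length (filter (\<lambda>y. ?x < y) ?ys)"
    by (metis mset_filter mset_sort size_mset)
  also have "filter (\<lambda>y. ?x < y) ?ys = filter (\<lambda>y. ?x < y) (take k ?ys) @ filter (\<lambda>y. ?x < y) (drop k ?ys)"
    by (metis append_take_drop_id filter_append)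
  also have "filter (\<lambda>y. ?x < y) (take k ?ys) = []"
  proof -
    have "\<forall>y\<in>set (take k ?ys). \<not> ?x < y"
    proof
      fix y assume "y \<in> set (take k ?ys)"
      then obtain i where i: "i < length (take k ?ys)" "y = take k ?ys ! i" by (auto simp: in_set_conv_nth)
      hence "i \<le> k - 1" "k - 1 < length ?ys" using k by auto
      hence "?ys ! i \<le> ?x" by (intro sorted_nth_mono) auto
      thus "\<not> ?x < y" using i by auto
    qed
    thus ?thesis by (simp add: filter_empty_conv)
  qed
  also have "length ([] @ filter (\<lambda>y. ?x < y) (drop k ?ys)) \<le> length xs - k"
    using length_filter_le[of "\<lambda>y. ?x < y" "drop k ?ys"] by simp
  finally show ?thesis .
qed

lemma Sobs_eq: "\<forall>i<n. M1 i = M0 i \<Longrightarrow> Sobs n M1 M0 T = {i. i < n \<and> M1 i}"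
  unfolding Sobs_def Mobs_def by auto

lemma Jtop_eq:
  assumes "Sobs n M1 M0 T = S"
  shows "Jtop n M1 M0 Y1 Y0 T L = {i\<in>S \<inter> T. card {j\<in>S \<inter> T. j \<noteq> i \<and> psi j i (Y1 j) (Y1 i) = 1} < L}"
proof -
  have "{j\<in>S \<inter> T. j \<noteq> i \<and> psi j i (Yobs Y1 Y0 T j) (Yobs Y1 Y0 T i) = 1}
      = {j\<in>S \<inter> T. j \<noteq> i \<and> psi j i (Y1 j) (Y1 i) = 1}" if "i \<in> S \<inter> T" for i
    using that by (auto simp: Yobs_def)
  thus ?thesis unfolding Jtop_def Let_def assms by auto
qed

lemma vvec_S:
  assumes "Sobs n M1 M0 T = S" "i \<in> S"
  shows "vvec n M1 M0 Y1 Y0 T k c i =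
    (if i \<in> Jtop n M1 M0 Y1 Y0 T (nS1 n M1 M0 T - k) then -\<infinity>
     else ereal (if i \<in> S \<inter> T then Y1 i - c else Y0 i))"
  using assms unfolding vvec_def Yobs_def by auto

lemma pval_ge:
  fixes Y1 Y0 :: "nat \<Rightarrow> real"
  assumes sharp: "\<forall>i<n. M1 i = M0 i" and phi: "mono phi"
    and k: "k \<le> nS1 n M1 M0 T" and H: "Hto n M1 M0 Y1 Y0 T k c"
  shows "GRS b phi {i. i < n \<and> M1 i} (card ({i. i < n \<and> M1 i} \<inter> T)) y0
           (tRS b phi {i. i < n \<and> M1 i} T (\<lambda>i. ereal (Y0 i)))
         \<le> pval n M1 M0 Y1 Y0 b phi y0 T k c"
proof -
  define S where "S = {i. i < n \<and> M1 i}"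
  have SS: "Sobs n M1 M0 T = S" unfolding S_def by (rule Sobs_eq[OF sharp])
  have finS: "finite S" unfolding S_def by simp
  have m: "nS1 n M1 M0 T = card (S \<inter> T)" unfolding nS1_def SS ..
  let ?v = "vvec n M1 M0 Y1 Y0 T k c"
  have "tRS b phi S (S \<inter> T) ?v \<le> tRS b phi S (S \<inter> T) (\<lambda>i. ereal (Y0 i))"
  proof (rule main_ineq[OF finS _ phi])
    show "S \<inter> T \<subseteq> S" by auto
    show "Jtop n M1 M0 Y1 Y0 T (card (S \<inter> T) - k) =
      {i\<in>S \<inter> T. card {j\<in>S \<inter> T. j \<noteq> i \<and> psi j i (Y1 j) (Y1 i) = 1} < card (S \<inter> T) - k}"
      by (rule Jtop_eq[OF SS])
    show "card (S \<inter> T) - k \<le> card (S \<inter> T)" by simp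
    show "card {i\<in>S \<inter> T. c < Y1 i - Y0 i} \<le> card (S \<inter> T) - k"
      using H unfolding Hto_def SS m by simp
    show "?v i = (if i \<in> Jtop n M1 M0 Y1 Y0 T (card (S \<inter> T) - k) then -\<infinity>
                  else ereal (if i \<in> S \<inter> T then Y1 i - c else Y0 i))" if "i \<in> S" for i
      using vvec_S[OF SS that] m by simp
  qed
  hence "tRS b phi S T ?v \<le> tRS b phi S T (\<lambda>i. ereal (Y0 i))" by (simp add: tRS_Int)
  hence "GRS b phi S (card (S \<inter> T)) y0 (tRS b phi S T (\<lambda>i. ereal (Y0 i)))
      \<le> GRS b phi S (card (S \<inter> T)) y0 (tRS b phi S T ?v)" by (rule GRS_anti)
  thus ?thesis unfolding pval_def Let_def SS m S_def[symmetric] .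
qed

lemma pval_mono:
  fixes Y1 Y0 :: "nat \<Rightarrow> real"
  assumes sharp: "\<forall>i<n. M1 i = M0 i" and phi: "mono phi" and cc: "c \<le> c'"
  shows "pval n M1 M0 Y1 Y0 b phi y0 T k c \<le> pval n M1 M0 Y1 Y0 b phi y0 T k c'"
proof -
  define S where "S = {i. i < n \<and> M1 i}"
  have SS: "Sobs n M1 M0 T = S" unfolding S_def by (rule Sobs_eq[OF sharp])
  have finS: "finite S" unfolding S_def by simp
  let ?J = "Jtop n M1 M0 Y1 Y0 T (nS1 n M1 M0 T - k)"
  have JST: "?J \<subseteq> S \<inter> T" unfolding Jtop_eq[OF SS] by auto
  let ?v = "vvec n M1 M0 Y1 Y0 T k c" and ?v' = "vvec n M1 M0 Y1 Y0 T k c'"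
  have "tRS b phi S (S \<inter> T) ?v' \<le> tRS b phi S (S \<inter> T) ?v"
  proof (rule tRS_mono[OF finS _ phi])
    show "S \<inter> T \<subseteq> S" by auto
    fix j assume j: "j \<in> S - S \<inter> T"
    have "{i\<in>S \<inter> T. klt ?v i j} \<subseteq> {i\<in>S \<inter> T. klt ?v' i j}"
    proof
      fix i assume i: "i \<in> {i\<in>S \<inter> T. klt ?v i j}"
      have "?v' i \<le> ?v i" using i vvec_S[OF SS, of i] cc by auto
      moreover have "?v' j = ?v j" using j JST vvec_S[OF SS, of j] by auto
      ultimately show "i \<in> {i\<in>S \<inter> T. klt ?v' i j}" using i klt_mono_left[of ?v' i ?v j] by auto
    qed
    thus "dcnt ?v (S \<inter> T) j \<le> dcnt ?v' (S \<inter> T) j" unfolding dcnt_def using finS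
      by (intro card_mono) auto
  qed
  hence "tRS b phi S T ?v' \<le> tRS b phi S T ?v" by (simp add: tRS_Int)
  thus ?thesis unfolding pval_def Let_def SS by (rule GRS_anti)
qed

theorem theorem9:
  fixes n n1 :: nat and Y1 Y0 :: "nat \<Rightarrow> real" and M1 M0 :: "nat \<Rightarrow> bool"
    and b :: bool and phi :: "nat \<Rightarrow> real" and y0 :: "nat \<Rightarrow> real" and \<alpha> :: real
  assumes n1_pos: "1 \<le> n1" and n0_pos: "n1 < n"
    and phi_mono: "mono phi"
    and sharp: "\<forall>i<n. M1 i = M0 i"
    and alpha: "0 < \<alpha>" "\<alpha> < 1"
  shows
    "(\<forall>k c. 1 \<le> k \<longrightarrow>
        measure_pmf.prob (pmf_of_set (assignments n n1))
          {T. k \<le> nS1 n M1 M0 T \<and> Hto n M1 M0 Y1 Y0 T k c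
              \<and> pval n M1 M0 Y1 Y0 b phi y0 T k c \<le> \<alpha>} \<le> \<alpha>)
   \<and> (\<forall>k. 1 \<le> k \<longrightarrow>
        measure_pmf.prob (pmf_of_set (assignments n n1))
          {T. k \<le> nS1 n M1 M0 T \<longrightarrow>
              tau_to n M1 M0 Y1 Y0 T k \<in> Ito n M1 M0 Y1 Y0 b phi y0 \<alpha> T k} \<ge> 1 - \<alpha>)
   \<and> (\<forall>k T. T \<in> assignments n n1 \<and> 1 \<le> k \<and> k \<le> nS1 n M1 M0 T \<longrightarrow>
        (let I = Ito n M1 M0 Y1 Y0 b phi y0 \<alpha> T k; h = Inf (ereal ` I) in
           I = {c. h \<le> ereal c} \<or> I = {c. h < ereal c}))
   \<and> measure_pmf.prob (pmf_of_set (assignments n n1))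
        {T. \<forall>k. 1 \<le> k \<and> k \<le> nS1 n M1 M0 T \<longrightarrow>
              tau_to n M1 M0 Y1 Y0 T k \<in> Ito n M1 M0 Y1 Y0 b phi y0 \<alpha> T k} \<ge> 1 - \<alpha>"
proof -
  define S where "S = {i. i < n \<and> M1 i}"
  define asg where "asg = assignments n n1"
  define pstar where "pstar T = GRS b phi S (card (S \<inter> T)) y0 (tRS b phi S T (\<lambda>i. ereal (Y0 i)))" for T
  have SS: "Sobs n M1 M0 T = S" for T unfolding S_def by (rule Sobs_eq[OF sharp])
  have Sn: "S \<subseteq> {..<n}" unfolding S_def by auto
  have fa: "finite asg" unfolding asg_def by (rule finite_assignments)
  have "{..<n1} \<in> asg" unfolding asg_def assignments_def using n0_pos by auto
  hence ne: "asg \<noteq> {}" by auto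
  have Npos: "0 < card asg" using fa ne by (simp add: card_gt_0_iff)
  have prob: "measure_pmf.prob (pmf_of_set asg) X = card (asg \<inter> X) / card asg" for X
    by (rule measure_pmf_of_set[OF ne fa])
  let ?W = "{T\<in>asg. pstar T \<le> \<alpha>}"
  have V: "card ?W \<le> \<alpha> * card asg"
    unfolding pstar_def asg_def by (rule lemmaV[OF Sn]) (use alpha in simp)
  have ge: "pstar T \<le> pval n M1 M0 Y1 Y0 b phi y0 T k c"
    if "k \<le> nS1 n M1 M0 T" "Hto n M1 M0 Y1 Y0 T k c" for T k c
    unfolding pstar_def S_def by (rule pval_ge[OF sharp phi_mono that])
  have Htau: "Hto n M1 M0 Y1 Y0 T k (tau_to n M1 M0 Y1 Y0 T k)"
    if "1 \<le> k" "k \<le> nS1 n M1 M0 T" for T k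
  proof -
    let ?xs = "sorted_list_of_set (S \<inter> T)"
    have fin: "finite (S \<inter> T)" using Sn by (auto intro: finite_subset)
    have len: "length ?xs = nS1 n M1 M0 T" unfolding nS1_def SS by simp
    have st: "set ?xs = S \<inter> T" using fin by simp
    show ?thesis
      using sorted_kth_H[of ?xs k "\<lambda>i. Y1 i - Y0 i"] that len st
      unfolding Hto_def tau_to_def SS by simp
  qed
  have P1: "card (asg \<inter> {T. k \<le> nS1 n M1 M0 T \<and> Hto n M1 M0 Y1 Y0 T k c
              \<and> pval n M1 M0 Y1 Y0 b phi y0 T k c \<le> \<alpha>}) \<le> card ?W" for k c
    using ge fa by (intro card_mono) (auto intro: order_trans)
  define Good where "Good = {T. \<forall>k. 1 \<le> k \<and> k \<le> nS1 n M1 M0 T \<longrightarrow>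
              tau_to n M1 M0 Y1 Y0 T k \<in> Ito n M1 M0 Y1 Y0 b phi y0 \<alpha> T k}"
  have bad: "asg - Good \<subseteq> ?W"
  proof
    fix T assume T: "T \<in> asg - Good"
    then obtain k where k: "1 \<le> k" "k \<le> nS1 n M1 M0 T"
      "tau_to n M1 M0 Y1 Y0 T k \<notin> Ito n M1 M0 Y1 Y0 b phi y0 \<alpha> T k"
      unfolding Good_def by auto
    have "pval n M1 M0 Y1 Y0 b phi y0 T k (tau_to n M1 M0 Y1 Y0 T k) \<le> \<alpha>"
      using k(3) unfolding Ito_def by auto
    thus "T \<in> ?W" using ge[OF k(2) Htau[OF k(1,2)]] T by auto
  qed
  have "card asg = card (asg \<inter> Good) + card (asg - Good)"
    using fa by (metis Diff_Diff_Int card_Diff_subset_Int Int_commute Int_lower2 add.commute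
        card_Diff_subset card_mono finite_Int le_add_diff_inverse)
  moreover have "card (asg - Good) \<le> card ?W" using fa bad by (intro card_mono) auto
  ultimately have G: "(1 - \<alpha>) * card asg \<le> card (asg \<inter> Good)" using V by (simp add: algebra_simps)
  have goodprob: "1 - \<alpha> \<le> measure_pmf.prob (pmf_of_set asg) Good"
    unfolding prob using G Npos by (simp add: field_simps)
  show ?thesis
  proof (intro conjI allI impI)
    fix k c assume "1 \<le> (k::nat)"
    have "real (card (asg \<inter> {T. k \<le> nS1 n M1 M0 T \<and> Hto n M1 M0 Y1 Y0 T k c
              \<and> pval n M1 M0 Y1 Y0 b phi y0 T k c \<le> \<alpha>})) \<le> \<alpha> * card asg"
      using P1[of k c] V by linarith
    thus "measure_pmf.prob (pmf_of_set (assignments n n1))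
          {T. k \<le> nS1 n M1 M0 T \<and> Hto n M1 M0 Y1 Y0 T k c
              \<and> pval n M1 M0 Y1 Y0 b phi y0 T k c \<le> \<alpha>} \<le> \<alpha>"
      unfolding asg_def[symmetric] prob using Npos by (simp add: field_simps)
  next
    fix k :: nat assume k: "1 \<le> k"
    let ?X = "{T. k \<le> nS1 n M1 M0 T \<longrightarrow>
              tau_to n M1 M0 Y1 Y0 T k \<in> Ito n M1 M0 Y1 Y0 b phi y0 \<alpha> T k}"
    have "card (asg \<inter> Good) \<le> card (asg \<inter> ?X)" using fa k unfolding Good_def by (intro card_mono) auto
    hence "measure_pmf.prob (pmf_of_set asg) Good \<le> measure_pmf.prob (pmf_of_set asg) ?X"
      unfolding prob using Npos by (simp add: divide_right_mono)
    thus "1 - \<alpha> \<le> measure_pmf.prob (pmf_of_set (assignments n n1)) ?X"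
      using goodprob unfolding asg_def by linarith
  next
    fix k T
    assume "T \<in> assignments n n1 \<and> 1 \<le> k \<and> k \<le> nS1 n M1 M0 T"
    have up: "c' \<in> Ito n M1 M0 Y1 Y0 b phi y0 \<alpha> T k"
      if "c \<in> Ito n M1 M0 Y1 Y0 b phi y0 \<alpha> T k" "c \<le> c'" for c c'
      using that pval_mono[OF sharp phi_mono that(2), of Y1 Y0 b y0 T k] unfolding Ito_def by auto
    show "let I = Ito n M1 M0 Y1 Y0 b phi y0 \<alpha> T k; h = Inf (ereal ` I) in
           I = {c. h \<le> ereal c} \<or> I = {c. h < ereal c}"
      unfolding Let_def by (rule upclosed_interval) (rule up)
  next
    show "1 - \<alpha> \<le> measure_pmf.prob (pmf_of_set (assignments n n1))
        {T. \<forall>k. 1 \<le> k \<and> k \<le> nS1 n M1 M0 T \<longrightarrow>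
              tau_to n M1 M0 Y1 Y0 T k \<in> Ito n M1 M0 Y1 Y0 b phi y0 \<alpha> T k}"
      using goodprob unfolding Good_def asg_def .
  qed
qed

end
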